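(* Let $M$ be a proper metric space and $X_1,\dots,X_n\subseteq M$ Borel subsets. Then the sets $A_0=X_1\cap\dots\cap X_n$ and $A_i=X_i^c\cap X_{i+1}\cap\dots\cap X_n$ ($i=1,\dots,n$) form a partition of $M$. Moreover, if $X_1,\dots,X_n$ is a coarsely transverse collection of half spaces, then $A_0,\dots,A_n$ is a coarsely transverse $n$-partition.
   Context: For $Y\subseteq M$, $Y_R=\{x:d(x,Y)\le R\}$. Coarsely transverse half spaces: Borel sets $X_1,\dots,X_n$ with $\bigcap_i (X_i)_R\cap (X_i^c)_R$ bounded for every $R\ge0$. A coarsely transverse $n$-partition: pairwise disjoint Borel sets $A_0,\dots,A_n$ with union $M$ such that $(A_0)_R\cap\dots\cap(A_n)_R$ is bounded for every $R\ge 0$. *)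

theory Defs
  imports "HOL-Analysis.Analysis"
begin

text \<open>Closed R-neighbourhood Y_R = {x. d(x,Y) \<le> R}. With the convention
  d(x, {}) = +infinity, the neighbourhood of the empty set is empty
  (Isabelle's infdist x {} is 0, hence the explicit guard).\<close>
definition cnbhd :: "'a::metric_space set \<Rightarrow> real \<Rightarrow> 'a set" where
  "cnbhd Y R = {x. Y \<noteq> {} \<and> infdist x Y \<le> R}"

definition coarsely_transverse_halfspaces :: "nat \<Rightarrow> (nat \<Rightarrow> 'a::metric_space set) \<Rightarrow> bool" where
  "coarsely_transverse_halfspaces n X \<longleftrightarrow>
     (\<forall>i\<in>{1..n}. X i \<in> sets borel) \<and>
     (\<forall>R\<ge>0. bounded (\<Inter>i\<in>{1..n}. cnbhd (X i) R \<inter> cnbhd (- X i) R))"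

definition coarsely_transverse_partition :: "nat \<Rightarrow> (nat \<Rightarrow> 'a::metric_space set) \<Rightarrow> bool" where
  "coarsely_transverse_partition n A \<longleftrightarrow>
     (\<forall>i\<in>{0..n}. A i \<in> sets borel) \<and>
     (\<forall>i\<in>{0..n}. \<forall>j\<in>{0..n}. i \<noteq> j \<longrightarrow> A i \<inter> A j = {}) \<and>
     (\<Union>i\<in>{0..n}. A i) = UNIV \<and>
     (\<forall>R\<ge>0. bounded (\<Inter>i\<in>{0..n}. cnbhd (A i) R))"

definition halfspace_partition :: "nat \<Rightarrow> (nat \<Rightarrow> 'a set) \<Rightarrow> nat \<Rightarrow> 'a set" where
  "halfspace_partition n X i =
     (if i = 0 then (\<Inter>j\<in>{1..n}. X j) else - X i \<inter> (\<Inter>j\<in>{i+1..n}. X j))"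

end

theory Submission
  imports Defs
begin

lemma cnbhd_mono: "A \<subseteq> B \<Longrightarrow> cnbhd A R \<subseteq> cnbhd B R"
proof
  fix x assume AB: "A \<subseteq> B" and x: "x \<in> cnbhd A R"
  then have ne: "A \<noteq> {}" and d: "infdist x A \<le> R" unfolding cnbhd_def by auto
  have "infdist x B \<le> infdist x A" by (rule infdist_mono[OF AB ne])
  moreover have "B \<noteq> {}" using AB ne by blast
  ultimately show "x \<in> cnbhd B R" using d unfolding cnbhd_def by auto
qed
lemma borel_INT: "(\<And>i. i \<in> I \<Longrightarrow> F i \<in> sets borel) \<Longrightarrow> finite I \<Longrightarrow> (\<Inter>i\<in>I. F i) \<in> sets borel"
  by (rule sets.countable_INT'') (auto intro: countable_finite)

theorem lemma5p5:
  fixes X :: "nat \<Rightarrow> 'a::heine_borel set" and n :: nat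
  assumes "\<forall>i\<in>{1..n}. X i \<in> sets borel"
  shows "(\<forall>i\<in>{0..n}. \<forall>j\<in>{0..n}. i \<noteq> j \<longrightarrow>
            halfspace_partition n X i \<inter> halfspace_partition n X j = {})
       \<and> (\<Union>i\<in>{0..n}. halfspace_partition n X i) = UNIV
       \<and> (coarsely_transverse_halfspaces n X \<longrightarrow>
            coarsely_transverse_partition n (halfspace_partition n X))"
proof -
  let ?A = "halfspace_partition n X"
  have A0: "?A 0 \<subseteq> X i" if "i \<in> {1..n}" for i
    using that unfolding halfspace_partition_def by auto
  have Ai: "?A i \<subseteq> - X i" if "i \<in> {1..n}" for i
    using that unfolding halfspace_partition_def by auto
  have Aij: "?A i \<subseteq> X j" if "i < j" "j \<le> n" for i j
    using that unfolding halfspace_partition_def by auto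
  have disj: "\<forall>i\<in>{0..n}. \<forall>j\<in>{0..n}. i \<noteq> j \<longrightarrow> ?A i \<inter> ?A j = {}"
  proof (intro ballI impI)
    fix i j assume ij: "i \<in> {0..n}" "j \<in> {0..n}" "i \<noteq> j"
    have key: "?A a \<inter> ?A b = {}" if "a < b" "b \<le> n" for a b
      using that Aij[of a b] Ai[of b] by auto
    show "?A i \<inter> ?A j = {}"
    proof (cases "i < j")
      case True then show ?thesis using key ij by auto
    next
      case False then have "j < i" using ij by auto
      then show ?thesis using key[of j i] ij by (auto simp: Int_commute)
    qed
  qed
  have cov: "(\<Union>i\<in>{0..n}. ?A i) = UNIV"
  proof (rule set_eqI, simp)
    fix x
    show "\<exists>i\<in>{0..n}. x \<in> ?A i"
    proof (cases "\<exists>j\<in>{1..n}. x \<notin> X j")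
      case False
      then have "x \<in> ?A 0" unfolding halfspace_partition_def by auto
      then show ?thesis by auto
    next
      case True
      define S where "S = {j\<in>{1..n}. x \<notin> X j}"
      have fin: "finite S" "S \<noteq> {}" using True unfolding S_def by auto
      define m where "m = Max S"
      have mS: "m \<in> S" using fin Max_in m_def by blast
      have le: "\<And>j. j \<in> S \<Longrightarrow> j \<le> m" using fin m_def by auto
      have m1: "m \<ge> 1" "x \<notin> X m" using mS unfolding S_def by auto
      have "x \<in> X j" if "j \<in> {m+1..n}" for j
      proof (rule ccontr)
        assume "x \<notin> X j"
        then have "j \<in> S" using that m1 unfolding S_def by auto
        then show False using le[of j] that by auto
      qed
      then have "x \<in> ?A m" using m1 unfolding halfspace_partition_def by auto
      then show ?thesis using mS unfolding S_def by auto
    qed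
  qed
  have tr: "coarsely_transverse_partition n ?A" if H: "coarsely_transverse_halfspaces n X"
    unfolding coarsely_transverse_partition_def
  proof (intro conjI disj cov allI impI ballI)
    fix i assume iin: "i \<in> {0..n}"
    show "?A i \<in> sets borel"
      unfolding halfspace_partition_def using assms iin
      by (auto intro!: borel_INT sets.Int borel_comp)
  next
    fix R :: real assume R: "R \<ge> 0"
    have "(\<Inter>i\<in>{0..n}. cnbhd (?A i) R) \<subseteq> (\<Inter>i\<in>{1..n}. cnbhd (X i) R \<inter> cnbhd (- X i) R)"
    proof
      fix x assume x: "x \<in> (\<Inter>i\<in>{0..n}. cnbhd (?A i) R)"
      show "x \<in> (\<Inter>i\<in>{1..n}. cnbhd (X i) R \<inter> cnbhd (- X i) R)"
      proof
        fix i assume i: "i \<in> {1..n}"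
        have "x \<in> cnbhd (?A 0) R" "x \<in> cnbhd (?A i) R" using x i by auto
        then show "x \<in> cnbhd (X i) R \<inter> cnbhd (- X i) R"
          using cnbhd_mono[OF A0[OF i], of R] cnbhd_mono[OF Ai[OF i], of R] by auto
      qed
    qed
    moreover have "bounded (\<Inter>i\<in>{1..n}. cnbhd (X i) R \<inter> cnbhd (- X i) R)"
      using H R unfolding coarsely_transverse_halfspaces_def by auto
    ultimately show "bounded (\<Inter>i\<in>{0..n}. cnbhd (?A i) R)" using bounded_subset by blast
  qed
  show ?thesis using disj cov tr by blast
qed

end
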